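(* Let $T$ be dependent, $\kappa$ regular $>|T|$, $N\prec\mathfrak C$ $\kappa$-saturated and $q\in\mathbf S^{\mathrm{nsp},m}_{\ge\kappa}(N)$ for some $m<\omega$. Then for every $M\prec N$ with $\|M\|<\kappa$ and every formula $\varphi(\bar x,\bar y)$ with parameters from $N$, where $\ell g(\bar x)=m$ and $\bar y$ is finite, there are a formula $\psi(\bar x,\bar d)\in q$ and a function $\eta:{}^{\ell g(\bar y)}M\to\{0,1\}$ such that $$\psi(\bar x,\bar d)\vdash\{\varphi(\bar x,\bar b)^{\eta(\bar b)}:\bar b\in{}^{\ell g(\bar y)}M\}$$ (hence this set is included in $q$).
   Context: $T$ is a complete first-order theory, $\mathfrak C$ its monster model; types are computed in $\mathfrak C$. $T$ dependent means NIP. $\varphi^1=\varphi$, $\varphi^0=\neg\varphi$. A type $p$ does not split over $B$ if whenever $\varphi(\bar x,\bar b),\neg\varphi(\bar x,\bar c)\in p$ then $\mathrm{tp}(\bar b,B)\ne\mathrm{tp}(\bar c,B)$. Complete types $p(\bar x),q(\bar y)$ over $A$ are weakly orthogonal if for all $\bar a_1,\bar a_2$ realizing $p$ and $\bar b_1,\bar b_2$ realizing $q$, $\mathrm{tp}(\bar a_1{}^\frown\bar b_1,A)=\mathrm{tp}(\bar a_2{}^\frown\bar b_2,A)$. $\mathbf S^{\mathrm{nsp}}_{<\kappa}(A)$ is the set of complete types (in finitely many variables) over $A$ that do not split over some $B\subseteq A$ with $|B|<\kappa$; $\mathbf S^{\mathrm{nsp},m}_{\ge\kappa}(A)$ is the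 set of $p\in\mathbf S^m(A)$ weakly orthogonal to every $r\in\mathbf S^{\mathrm{nsp}}_{<\kappa}(A)$. *)

theory Defs
  imports Main
begin

datatype 'f trm = Var nat | Fn 'f "'f trm list"

datatype ('f,'r) fm =
    Eq "'f trm" "'f trm"
  | Rel 'r "'f trm list"
  | Neg "('f,'r) fm"
  | Conj "('f,'r) fm" "('f,'r) fm"
  | Ex nat "('f,'r) fm"

record ('f,'r,'a) struc =
  dom :: "'a set"
  fa  :: "'f \<Rightarrow> nat"
  ra  :: "'r \<Rightarrow> nat"
  fn  :: "'f \<Rightarrow> 'a list \<Rightarrow> 'a"
  rl  :: "'r \<Rightarrow> 'a list \<Rightarrow> bool"

fun wf_trm :: "('f \<Rightarrow> nat) \<Rightarrow> 'f trm \<Rightarrow> bool" where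
  "wf_trm ar (Var i) = True"
| "wf_trm ar (Fn f ts) = (length ts = ar f \<and> (\<forall>t\<in>set ts. wf_trm ar t))"

fun wf_fm :: "('f \<Rightarrow> nat) \<Rightarrow> ('r \<Rightarrow> nat) \<Rightarrow> ('f,'r) fm \<Rightarrow> bool" where
  "wf_fm af ar (Eq t u) = (wf_trm af t \<and> wf_trm af u)"
| "wf_fm af ar (Rel r ts) = (length ts = ar r \<and> (\<forall>t\<in>set ts. wf_trm af t))"
| "wf_fm af ar (Neg \<phi>) = wf_fm af ar \<phi>"
| "wf_fm af ar (Conj \<phi> \<psi>) = (wf_fm af ar \<phi> \<and> wf_fm af ar \<psi>)"
| "wf_fm af ar (Ex i \<phi>) = wf_fm af ar \<phi>"

definition wf :: "('f,'r,'a) struc \<Rightarrow> ('f,'r) fm \<Rightarrow> bool" where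
  "wf C \<phi> = wf_fm (fa C) (ra C) \<phi>"

fun fvt :: "'f trm \<Rightarrow> nat set" where
  "fvt (Var i) = {i}"
| "fvt (Fn f ts) = (\<Union>t\<in>set ts. fvt t)"

fun fv :: "('f,'r) fm \<Rightarrow> nat set" where
  "fv (Eq t u) = fvt t \<union> fvt u"
| "fv (Rel r ts) = (\<Union>t\<in>set ts. fvt t)"
| "fv (Neg \<phi>) = fv \<phi>"
| "fv (Conj \<phi> \<psi>) = fv \<phi> \<union> fv \<psi>"
| "fv (Ex i \<phi>) = fv \<phi> - {i}"

fun evalt :: "('f \<Rightarrow> 'a list \<Rightarrow> 'a) \<Rightarrow> (nat \<Rightarrow> 'a) \<Rightarrow> 'f trm \<Rightarrow> 'a" where
  "evalt F v (Var i) = v i"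
| "evalt F v (Fn f ts) = F f (map (evalt F v) ts)"

fun sat :: "('f,'r,'a) struc \<Rightarrow> (nat \<Rightarrow> 'a) \<Rightarrow> ('f,'r) fm \<Rightarrow> bool" where
  "sat S v (Eq t u) = (evalt (fn S) v t = evalt (fn S) v u)"
| "sat S v (Rel r ts) = rl S r (map (evalt (fn S) v) ts)"
| "sat S v (Neg \<phi>) = (\<not> sat S v \<phi>)"
| "sat S v (Conj \<phi> \<psi>) = (sat S v \<phi> \<and> sat S v \<psi>)"
| "sat S v (Ex i \<phi>) = (\<exists>a\<in>dom S. sat S (v(i := a)) \<phi>)"

definition struct :: "('f,'r,'a) struc \<Rightarrow> bool" where
  "struct C \<longleftrightarrow> dom C \<noteq> {} \<and>
     (\<forall>f as. length as = fa C f \<and> set as \<subseteq> dom C \<longrightarrow> fn C f as \<in> dom C)"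

definition restr :: "('f,'r,'a) struc \<Rightarrow> 'a set \<Rightarrow> ('f,'r,'a) struc" where
  "restr C A = C\<lparr>dom := A\<rparr>"

definition elem_sub :: "('f,'r,'a) struc \<Rightarrow> 'a set \<Rightarrow> bool" where
  "elem_sub C A \<longleftrightarrow> A \<noteq> {} \<and> A \<subseteq> dom C \<and>
     (\<forall>f as. length as = fa C f \<and> set as \<subseteq> A \<longrightarrow> fn C f as \<in> A) \<and>
     (\<forall>\<phi> v. wf C \<phi> \<and> (\<forall>i. v i \<in> A) \<longrightarrow> (sat (restr C A) v \<phi> \<longleftrightarrow> sat C v \<phi>))"

definition asg :: "'a list \<Rightarrow> (nat \<Rightarrow> 'a) \<Rightarrow> nat \<Rightarrow> 'a" where
  "asg xs w i = (if i < length xs then xs ! i else w i)"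

definition shift_asg :: "nat \<Rightarrow> 'a list \<Rightarrow> (nat \<Rightarrow> 'a) \<Rightarrow> nat \<Rightarrow> 'a" where
  "shift_asg m b w i = (if m \<le> i \<and> i < m + length b then b ! (i - m) else w i)"

text \<open>A formula over A in the variables x_0..x_{n-1} is a pair (phi, w) where
  w assigns parameters from A to all other variables.  A type in n variables
  is tagged with n.\<close>
definition tp :: "('f,'r,'a) struc \<Rightarrow> 'a set \<Rightarrow> 'a list
                   \<Rightarrow> nat \<times> (('f,'r) fm \<times> (nat \<Rightarrow> 'a)) set" where
  "tp C A xs = (length xs, {(\<phi>, w). wf C \<phi> \<and> (\<forall>i. w i \<in> A) \<and> sat C (asg xs w) \<phi>})"

definition Stypes :: "('f,'r,'a) struc \<Rightarrow> 'a set \<Rightarrow> nat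
                   \<Rightarrow> (nat \<times> (('f,'r) fm \<times> (nat \<Rightarrow> 'a)) set) set" where
  "Stypes C A n = {tp C A xs | xs. length xs = n \<and> set xs \<subseteq> dom C}"

definition realizes :: "('f,'r,'a) struc \<Rightarrow> 'a set \<Rightarrow> 'a list
                   \<Rightarrow> nat \<times> (('f,'r) fm \<times> (nat \<Rightarrow> 'a)) set \<Rightarrow> bool" where
  "realizes C A xs p \<longleftrightarrow> set xs \<subseteq> dom C \<and> tp C A xs = p"

definition weakly_orth where
  "weakly_orth C A p r \<longleftrightarrow>
     (\<forall>a1 a2 b1 b2. realizes C A a1 p \<and> realizes C A a2 p \<and>
        realizes C A b1 r \<and> realizes C A b2 r \<longrightarrow>
        tp C A (a1 @ b1) = tp C A (a2 @ b2))"

definition nonsplit where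
  "nonsplit C A B p \<longleftrightarrow>
     (\<forall>\<phi> k b c w. wf C \<phi> \<and> fv \<phi> \<subseteq> {..<fst p + k} \<and>
        length b = k \<and> length c = k \<and> set b \<subseteq> A \<and> set c \<subseteq> A \<and> (\<forall>i. w i \<in> A) \<and>
        (\<phi>, shift_asg (fst p) b w) \<in> snd p \<and> (Neg \<phi>, shift_asg (fst p) c w) \<in> snd p
        \<longrightarrow> tp C B b \<noteq> tp C B c)"

abbreviation card_lt :: "'a set \<Rightarrow> 'k rel \<Rightarrow> bool" where
  "card_lt A \<kappa> \<equiv> ordLess2 (card_of A) \<kappa>"

definition Snsp_lt where
  "Snsp_lt C A \<kappa> = {p. \<exists>n. p \<in> Stypes C A n \<and> (\<exists>B\<subseteq>A. card_lt B \<kappa> \<and> nonsplit C A B p)}"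

definition Snsp_ge where
  "Snsp_ge C A \<kappa> m = {p \<in> Stypes C A m. \<forall>r\<in>Snsp_lt C A \<kappa>. weakly_orth C A p r}"

definition saturated :: "('f,'r,'a) struc \<Rightarrow> 'k rel \<Rightarrow> bool" where
  "saturated C lam \<longleftrightarrow>
     (\<forall>A P. A \<subseteq> dom C \<and> card_lt A lam \<and>
        (\<forall>(\<phi>, w)\<in>P. wf C \<phi> \<and> (\<forall>i. w i \<in> A)) \<and>
        (\<forall>F\<subseteq>P. finite F \<longrightarrow> (\<exists>c\<in>dom C. \<forall>(\<phi>, w)\<in>F. sat C (asg [c] w) \<phi>))
        \<longrightarrow> (\<exists>c\<in>dom C. \<forall>(\<phi>, w)\<in>P. sat C (asg [c] w) \<phi>))"

definition ksaturated :: "('f,'r,'a) struc \<Rightarrow> 'a set \<Rightarrow> 'k rel \<Rightarrow> bool" where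
  "ksaturated C N \<kappa> \<longleftrightarrow>
     (\<forall>A. A \<subseteq> N \<and> card_lt A \<kappa> \<longrightarrow> (\<forall>c\<in>dom C. \<exists>a\<in>N. tp C A [a] = tp C A [c]))"

definition NIP :: "('f,'r,'a) struc \<Rightarrow> bool" where
  "NIP C \<longleftrightarrow> \<not> (\<exists>\<phi> n k (a :: nat \<Rightarrow> 'a list) (b :: nat set \<Rightarrow> 'a list) w.
       wf C \<phi> \<and> fv \<phi> \<subseteq> {..<n + k} \<and> (\<forall>i. w i \<in> dom C) \<and>
       (\<forall>i. length (a i) = n \<and> set (a i) \<subseteq> dom C) \<and>
       (\<forall>I. length (b I) = k \<and> set (b I) \<subseteq> dom C) \<and>
       (\<forall>i I. sat C (asg (a i @ b I) w) \<phi> \<longleftrightarrow> i \<in> I))"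

end

theory Submission
  imports Defs
begin

fun rent :: "(nat \<Rightarrow> nat) \<Rightarrow> 'f trm \<Rightarrow> 'f trm" where
  "rent s (Var i) = Var (s i)"
| "rent s (Fn f ts) = Fn f (map (rent s) ts)"

fun ren :: "(nat \<Rightarrow> nat) \<Rightarrow> ('f,'r) fm \<Rightarrow> ('f,'r) fm" where
  "ren s (Eq t u) = Eq (rent s t) (rent s u)"
| "ren s (Rel r ts) = Rel r (map (rent s) ts)"
| "ren s (Neg p) = Neg (ren s p)"
| "ren s (Conj p1 p2) = Conj (ren s p1) (ren s p2)"
| "ren s (Ex i p) = Ex (s i) (ren s p)"

lemma evalt_rent: "evalt F v (rent s t) = evalt F (v \<circ> s) t"
  by (induction t) (auto cong: map_cong)

lemma wf_trm_rent: "wf_trm ar (rent s t) = wf_trm ar t"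
  by (induction t) auto

lemma sat_ren: "inj s \<Longrightarrow> sat S v (ren s p) = sat S (v \<circ> s) p"
proof (induction p arbitrary: v)
  case (Ex i p)
  have eq: "\<And>a. (v(s i := a)) \<circ> s = (v \<circ> s)(i := a)"
    using Ex.prems by (auto simp: fun_eq_iff inj_eq)
  have "sat S (v(s i := a)) (ren s p) = sat S ((v \<circ> s)(i := a)) p" for a
  proof -
    have "sat S (v(s i := a)) (ren s p) = sat S ((v(s i := a)) \<circ> s) p"
      by (rule Ex.IH[OF Ex.prems])
    then show ?thesis by (simp only: eq)
  qed
  then show ?case by (simp add: comp_def)
next
  case (Rel r ts)
  have "map (evalt (fn S) v) (map (rent s) ts) = map (evalt (fn S) (v \<circ> s)) ts"
    unfolding map_map by (rule map_cong) (simp_all only: comp_apply evalt_rent)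
  then show ?case by (simp only: ren.simps sat.simps)
next
  case (Eq t u) show ?case by (simp only: ren.simps sat.simps evalt_rent)
next
  case (Neg p) then show ?case by (simp only: ren.simps sat.simps)
next
  case (Conj p1 p2) then show ?case by (simp only: ren.simps sat.simps)
qed

lemma wf_ren: "wf C (ren s p) = wf C p"
  unfolding wf_def by (induction p) (auto simp: wf_trm_rent)

lemma evalt_cong: "(\<And>i. i \<in> fvt t \<Longrightarrow> v i = v' i) \<Longrightarrow> evalt F v t = evalt F v' t"
proof (induction t)
  case (Fn f ts)
  then have "map (evalt F v) ts = map (evalt F v') ts" by (auto intro!: map_cong)
  then show ?case by (simp del: map_eq_conv)
qed auto

lemma sat_cong: "(\<And>i. i \<in> fv p \<Longrightarrow> v i = v' i) \<Longrightarrow> sat S v p = sat S v' p"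
proof (induction p arbitrary: v v')
  case (Eq t u)
  have "evalt (fn S) v t = evalt (fn S) v' t" "evalt (fn S) v u = evalt (fn S) v' u"
    using Eq.prems by (auto intro: evalt_cong[where v=v and v'=v'])
  then show ?case by simp
next
  case (Rel r ts)
  have "map (evalt (fn S) v) ts = map (evalt (fn S) v') ts"
  proof (rule map_cong)
    fix t assume "t \<in> set ts"
    then show "evalt (fn S) v t = evalt (fn S) v' t"
      using Rel.prems by (intro evalt_cong) auto
  qed simp
  then show ?case by (simp del: map_eq_conv)
next
  case (Ex i p)
  have "sat S (v(i:=a)) p = sat S (v'(i:=a)) p" for a
  proof (rule Ex.IH)
    fix j assume "j \<in> fv p" then show "(v(i:=a)) j = (v'(i:=a)) j"
      using Ex.prems by (cases "j = i") auto
  qed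
  then show ?case by simp
next
  case (Neg p)
  have "sat S v p = sat S v' p" by (rule Neg.IH) (use Neg.prems in simp)
  then show ?case by simp
next
  case (Conj p1 p2)
  have "sat S v p1 = sat S v' p1" by (rule Conj.IH(1)) (use Conj.prems in simp)
  moreover have "sat S v p2 = sat S v' p2" by (rule Conj.IH(2)) (use Conj.prems in simp)
  ultimately show ?case by simp
qed

lemma finite_fvt: "finite (fvt t)" by (induction t) auto
lemma finite_fv: "finite (fv p)" by (induction p) (auto simp: finite_fvt)

lemma asg_snoc: "length ys = n \<Longrightarrow> (asg ys u)(n := c) = asg (ys @ [c]) u"
  by (auto simp: asg_def fun_eq_iff nth_append)

lemma asg_shift: "length a = m \<Longrightarrow> asg a (shift_asg m b w) = asg (a @ b) w"
  by (auto simp: asg_def shift_asg_def fun_eq_iff nth_append)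

lemma wf_Eq_Var: "wf C (Eq (Var i) (Var j))" by (simp add: wf_def)

lemma conj_pair:
  assumes "wf C p1" "wf C p2" "\<forall>i. w1 i \<in> A" "\<forall>i. w2 i \<in> A"
  shows "\<exists>p w. wf C p \<and> (\<forall>i. w i \<in> A) \<and> (\<forall>xs. length xs = m \<longrightarrow>
           (sat C (asg xs w) p \<longleftrightarrow> sat C (asg xs w1) p1 \<and> sat C (asg xs w2) p2))"
proof -
  define K where "K = Suc (Max (insert 0 (fv p1)))"
  have K: "i \<in> fv p1 \<Longrightarrow> i < K" for i
    unfolding K_def using finite_fv[of p1] by (simp add: le_imp_less_Suc)
  define s where "s = (\<lambda>i::nat. if i < m then i else i + K)"
  have inj: "inj s" unfolding s_def by (rule injI) (auto split: if_splits)
  define w where "w = (\<lambda>i. if m + K \<le> i then w2 (i - K) else w1 i)"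
  have wA: "\<forall>i. w i \<in> A" using assms unfolding w_def by auto
  have "sat C (asg xs w) (Conj p1 (ren s p2)) \<longleftrightarrow> sat C (asg xs w1) p1 \<and> sat C (asg xs w2) p2"
    if "length xs = m" for xs
  proof -
    have 1: "sat C (asg xs w) p1 = sat C (asg xs w1) p1"
    proof (rule sat_cong)
      fix i assume "i \<in> fv p1"
      then have "i < K" by (rule K)
      then show "asg xs w i = asg xs w1 i" by (auto simp: asg_def w_def)
    qed
    have "asg xs w \<circ> s = asg xs w2"
      using that by (auto simp: asg_def w_def s_def fun_eq_iff)
    then have 2: "sat C (asg xs w) (ren s p2) = sat C (asg xs w2) p2"
      by (simp add: sat_ren[OF inj])
    show ?thesis using 1 2 by simp
  qed
  moreover have "wf C (Conj p1 (ren s p2))" using assms wf_ren[of C s p2] by (simp add: wf_def)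
  ultimately show ?thesis using wA by blast
qed

lemma conj_set:
  assumes "finite G" "A \<noteq> {}" "\<forall>(p,w)\<in>G. wf C p \<and> (\<forall>i. w i \<in> A)"
  shows "\<exists>p w. wf C p \<and> (\<forall>i. w i \<in> A) \<and> (\<forall>xs. length xs = m \<longrightarrow>
           (sat C (asg xs w) p \<longleftrightarrow> (\<forall>(p',w')\<in>G. sat C (asg xs w') p')))"
  using assms(1,3)
proof (induction G rule: finite_induct)
  case empty
  obtain a where "a \<in> A" using assms(2) by blast
  then show ?case using wf_Eq_Var[of C 0 0] by (intro exI[of _ "Eq (Var 0) (Var 0)"] exI[of _ "\<lambda>_. a"]) auto
next
  case (insert x G)
  obtain p w where pw: "wf C p" "\<forall>i. w i \<in> A" "\<forall>xs. length xs = m \<longrightarrow>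
           (sat C (asg xs w) p \<longleftrightarrow> (\<forall>(p',w')\<in>G. sat C (asg xs w') p'))"
    using insert by auto
  obtain p1 w1 where x: "x = (p1, w1)" by (cases x)
  have "wf C p1" "\<forall>i. w1 i \<in> A" using insert.prems x by auto
  from conj_pair[OF this(1) pw(1) this(2) pw(2), of m] obtain p' w' where
    "wf C p'" "\<forall>i. w' i \<in> A" "\<forall>xs. length xs = m \<longrightarrow>
           (sat C (asg xs w') p' \<longleftrightarrow> sat C (asg xs w1) p1 \<and> sat C (asg xs w) p)" by blast
  then show ?case using pw(3) x by (intro exI[of _ p'] exI[of _ w']) auto
qed

context includes cardinal_syntax
begin

definition fsat :: "('f,'r,'a) struc \<Rightarrow> nat \<Rightarrow> (('f,'r) fm \<times> (nat \<Rightarrow> 'a)) set \<Rightarrow> bool" where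
  "fsat C n P \<longleftrightarrow> (\<exists>xs. length xs = n \<and> set xs \<subseteq> dom C \<and> (\<forall>(p,w)\<in>P. sat C (asg xs w) p))"

lemma card_small:
  assumes "infinite N" "finite F"
  shows "card_lt (N \<union> F) (cardSuc |N| )"
proof -
  have "|F| <o |N|"
    using finite_ordLess_infinite[of "|F|" "|N|"] assms by (simp add: Field_card_of card_of_well_order_on)
  then have F: "|F| \<le>o |N|" by (rule ordLess_imp_ordLeq)
  have N: "|N| \<le>o |N|" by (rule card_of_mono1) simp
  have "|N \<union> F| \<le>o |N|"
    by (rule card_of_Un_ordLeq_infinite_Field[OF _ N F card_of_Card_order]) (simp add: Field_card_of assms(1))
  then show ?thesis using cardSuc_ordLeq_ordLess[OF card_of_Card_order card_of_Card_order] by blast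
qed

lemma fsat_sub: "fsat C n P \<Longrightarrow> Q \<subseteq> P \<Longrightarrow> fsat C n Q"
  unfolding fsat_def by blast

lemma compact_fin:
  assumes "finite (dom C)" "\<forall>G\<subseteq>P. finite G \<longrightarrow> fsat C n G"
  shows "fsat C n P"
proof (rule ccontr)
  assume nf: "\<not> fsat C n P"
  define T where "T = {xs. set xs \<subseteq> dom C \<and> length xs = n}"
  have fT: "finite T" unfolding T_def using assms(1) by (rule finite_lists_length_eq)
  have "\<forall>xs\<in>T. \<exists>g\<in>P. \<not> sat C (asg xs (snd g)) (fst g)"
    using nf unfolding fsat_def T_def by fastforce
  then obtain f where f: "\<forall>xs\<in>T. f xs \<in> P \<and> \<not> sat C (asg xs (snd (f xs))) (fst (f xs))"
    by metis
  have "f ` T \<subseteq> P" using f by auto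
  then have "fsat C n (f ` T)" using assms(2) fT by auto
  then show False using f unfolding fsat_def T_def by fastforce
qed

lemma compact_inf:
  assumes satd: "saturated C (cardSuc |N| )" and N: "N \<subseteq> dom C" "N \<noteq> {}" "infinite N"
  shows "finite F \<Longrightarrow> F \<subseteq> dom C \<Longrightarrow> (\<forall>(p,w)\<in>P. wf C p \<and> (\<forall>i. w i \<in> N \<union> F)) \<Longrightarrow>
    (\<forall>G\<subseteq>P. finite G \<longrightarrow> fsat C n G) \<Longrightarrow> fsat C n P"
proof (induction n arbitrary: F P)
  case 0
  have "sat C (asg [] w) p" if "(p,w) \<in> P" for p w
    using "0.prems"(4)[rule_format, of "{(p,w)}"] that unfolding fsat_def by auto
  then show ?case unfolding fsat_def by auto
next
  case (Suc n)
  let ?A = "N \<union> F"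
  have Ane: "?A \<noteq> {}" using N by auto
  define P1' where "P1' = {(q, u). wf C q \<and> (\<forall>i. u i \<in> ?A) \<and>
     (\<exists>G. G \<subseteq> P \<and> finite G \<and> (\<forall>xs. length xs = Suc n \<longrightarrow>
        (sat C (asg xs u) q \<longleftrightarrow> (\<forall>(p,w)\<in>G. sat C (asg xs w) p))))}"
  define P1 where "P1 = (\<lambda>(q,u). (Ex n q, u)) ` P1'"
  have P1wf: "\<forall>(p,w)\<in>P1. wf C p \<and> (\<forall>i. w i \<in> ?A)"
    unfolding P1_def P1'_def by (auto simp: wf_def)
  have P1fs: "\<forall>H\<subseteq>P1. finite H \<longrightarrow> fsat C n H"
  proof (intro allI impI)
    fix H assume H: "H \<subseteq> P1" "finite H"
    have "\<forall>h\<in>H. \<exists>h'. h' \<in> P1' \<and> h = (Ex n (fst h'), snd h')"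
      using H(1) unfolding P1_def by auto
    then obtain f where f: "\<forall>h\<in>H. f h \<in> P1' \<and> h = (Ex n (fst (f h)), snd (f h))"
      by metis
    have "\<forall>h\<in>H. \<exists>G. G \<subseteq> P \<and> finite G \<and> (\<forall>xs. length xs = Suc n \<longrightarrow>
        (sat C (asg xs (snd (f h))) (fst (f h)) \<longleftrightarrow> (\<forall>(p,w)\<in>G. sat C (asg xs w) p)))"
    proof
      fix h assume "h \<in> H"
      then have "f h \<in> P1'" using f by blast
      then have "(fst (f h), snd (f h)) \<in> P1'" by simp
      then show "\<exists>G. G \<subseteq> P \<and> finite G \<and> (\<forall>xs. length xs = Suc n \<longrightarrow>
        (sat C (asg xs (snd (f h))) (fst (f h)) \<longleftrightarrow> (\<forall>(p,w)\<in>G. sat C (asg xs w) p)))"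
        unfolding P1'_def by (simp only: mem_Collect_eq case_prod_conv)
    qed
    then obtain g where g: "\<forall>h\<in>H. g h \<subseteq> P \<and> finite (g h) \<and> (\<forall>xs. length xs = Suc n \<longrightarrow>
        (sat C (asg xs (snd (f h))) (fst (f h)) \<longleftrightarrow> (\<forall>(p,w)\<in>g h. sat C (asg xs w) p)))"
      by metis
    have "\<Union>(g ` H) \<subseteq> P" "finite (\<Union>(g ` H))" using g H(2) by auto
    then have "fsat C (Suc n) (\<Union>(g ` H))"
      using Suc.prems(4) by blast
    then obtain xs where xs: "length xs = Suc n" "set xs \<subseteq> dom C"
      "\<forall>(p,w)\<in>\<Union>(g ` H). sat C (asg xs w) p"
      unfolding fsat_def by blast
    define ys where "ys = butlast xs"
    define c where "c = last xs"
    have xsyc: "xs = ys @ [c]" using xs(1) unfolding ys_def c_def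
      by (metis append_butlast_last_id list.size(3) nat.distinct(1))
    have ys: "length ys = n" "set ys \<subseteq> dom C" "c \<in> dom C" using xs xsyc by auto
    have "sat C (asg ys w) p" if "(p,w) \<in> H" for p w
    proof -
      define q where "q = fst (f (p,w))"
      have q: "p = Ex n q" "w = snd (f (p,w))" using f that unfolding q_def by auto
      have "g (p,w) \<subseteq> \<Union>(g ` H)" using that by blast
      then have "\<forall>(p',w')\<in>g (p,w). sat C (asg xs w') p'" using xs(3) by blast
      then have "sat C (asg xs w) q" using g that xs(1) q unfolding q_def by auto
      then have "sat C ((asg ys w)(n := c)) q" using asg_snoc[OF ys(1)] xsyc by simp
      then show ?thesis using q ys(3) by auto
    qed
    then show "fsat C n H" using ys unfolding fsat_def by auto
  qed
  obtain ys where ys: "length ys = n" "set ys \<subseteq> dom C" "\<forall>(p,w)\<in>P1. sat C (asg ys w) p"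
    using Suc.IH[OF Suc.prems(1,2) P1wf P1fs] unfolding fsat_def by blast
  define s where "s = (\<lambda>i::nat. if i < n then Suc i else if i = n then 0 else i)"
  have inj: "inj s" unfolding s_def by (rule injI) (auto split: if_splits)
  define mk where "mk = (\<lambda>w j. if 0 < j \<and> j \<le> n then ys ! (j - 1) else w j)"
  have mk: "asg [c] (mk w) \<circ> s = asg (ys @ [c]) w" for c w
    using ys(1) by (auto simp: fun_eq_iff asg_def mk_def s_def nth_append)
  define P2 where "P2 = {(ren s p, mk w) | p w. (p, w) \<in> P}"
  let ?A2 = "N \<union> (F \<union> set ys)"
  have A2: "?A2 \<subseteq> dom C" "card_lt ?A2 (cardSuc |N| )"
    using N Suc.prems ys by (auto intro: card_small)
  have P2wf: "\<forall>(p,w)\<in>P2. wf C p \<and> (\<forall>i. w i \<in> ?A2)"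
    using Suc.prems(3) ys unfolding P2_def mk_def by (fastforce simp: wf_ren)
  have P2fs: "\<forall>H\<subseteq>P2. finite H \<longrightarrow> (\<exists>c\<in>dom C. \<forall>(p,w)\<in>H. sat C (asg [c] w) p)"
  proof (intro allI impI)
    fix H assume H: "H \<subseteq> P2" "finite H"
    have "\<forall>h\<in>H. \<exists>g. g \<in> P \<and> h = (ren s (fst g), mk (snd g))"
      using H(1) unfolding P2_def by fastforce
    then obtain g where g: "\<forall>h\<in>H. g h \<in> P \<and> h = (ren s (fst (g h)), mk (snd (g h)))"
      by metis
    have "\<forall>(p,w)\<in>g ` H. wf C p \<and> (\<forall>i. w i \<in> ?A)" using g Suc.prems(3) by fastforce
    from conj_set[OF finite_imageI[OF H(2)] Ane this, of "Suc n"] obtain q u where qu: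
      "wf C q" "\<forall>i. u i \<in> ?A" "\<forall>xs. length xs = Suc n \<longrightarrow>
           (sat C (asg xs u) q \<longleftrightarrow> (\<forall>(p',w')\<in>g ` H. sat C (asg xs w') p'))" by blast
    have "g ` H \<subseteq> P" using g by auto
    then have "(q, u) \<in> P1'" unfolding P1'_def mem_Collect_eq case_prod_conv using qu H(2)
      by (intro conjI exI[of _ "g ` H"]) auto
    then have "(Ex n q, u) \<in> P1" unfolding P1_def by force
    then have "sat C (asg ys u) (Ex n q)" using ys(3) by auto
    then obtain c where c: "c \<in> dom C" "sat C (asg (ys @ [c]) u) q"
      using asg_snoc[OF ys(1)] by auto
    have "\<forall>(p',w')\<in>g ` H. sat C (asg (ys @ [c]) w') p'" using qu(3) c ys(1) by simp
    then have "sat C (asg [c] w) p" if "(p,w) \<in> H" for p w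
      using g that by (fastforce simp: sat_ren[OF inj] mk)
    then show "\<exists>c\<in>dom C. \<forall>(p,w)\<in>H. sat C (asg [c] w) p" using c(1) by auto
  qed
  obtain c where c: "c \<in> dom C" "\<forall>(p,w)\<in>P2. sat C (asg [c] w) p"
    using satd[unfolded saturated_def, rule_format, of ?A2 P2] A2 P2wf P2fs by blast
  have "sat C (asg (ys @ [c]) w) p" if "(p,w) \<in> P" for p w
  proof -
    have "(ren s p, mk w) \<in> P2" using that unfolding P2_def by blast
    then show ?thesis using c(2) by (fastforce simp: sat_ren[OF inj] mk)
  qed
  then show ?case unfolding fsat_def using ys c(1) by (intro exI[of _ "ys @ [c]"]) auto
qed

fun nq :: "nat \<Rightarrow> ('f,'r) fm" where
  "nq 0 = Eq (Var 0) (Var 0)"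
| "nq (Suc j) = Conj (Neg (Eq (Var 0) (Var (Suc j)))) (nq j)"

lemma sat_nq: "sat S v (nq j) \<longleftrightarrow> (\<forall>i. 0 < i \<and> i \<le> j \<longrightarrow> v 0 \<noteq> v i)"
  by (induction j) (auto simp: le_Suc_eq)

lemma wf_nq: "wf C (nq j)" unfolding wf_def by (induction j) auto

lemma finite_elem_sub:
  fixes C :: "('f,'r,'a) struc" and N :: "'a set"
  assumes es: "elem_sub C N" and fin: "finite N"
  shows "dom C \<subseteq> N"
proof -
  obtain L where L: "set L = N" using finite_list[OF fin] by blast
  obtain n0 where n0: "n0 \<in> N" using es unfolding elem_sub_def by blast
  define w where "w = (\<lambda>j. if 0 < j \<and> j \<le> length L then L ! (j - 1) else n0)"
  have wN: "\<forall>i. w i \<in> N" using L n0 unfolding w_def by auto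
  have key: "sat S w (Ex 0 (nq (length L))) \<longleftrightarrow> (\<exists>a\<in>dom S. a \<notin> N)" for S :: "('f,'r,'a) struc"
  proof -
    have "(\<forall>i. 0 < i \<and> i \<le> length L \<longrightarrow> a \<noteq> w i) \<longleftrightarrow> a \<notin> N" for a
    proof
      assume "\<forall>i. 0 < i \<and> i \<le> length L \<longrightarrow> a \<noteq> w i"
      then have "\<forall>k < length L. a \<noteq> L ! k"
        unfolding w_def by (metis Suc_leI diff_Suc_1 zero_less_Suc)
      then show "a \<notin> N" using L by (auto simp: in_set_conv_nth)
    next
      assume "a \<notin> N" then show "\<forall>i. 0 < i \<and> i \<le> length L \<longrightarrow> a \<noteq> w i"
        using L unfolding w_def by auto
    qed
    then show ?thesis by (simp add: sat_nq)
  qed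
  have "wf C (Ex 0 (nq (length L)))" using wf_nq[of C] by (simp add: wf_def)
  then have "sat (restr C N) w (Ex 0 (nq (length L))) = sat C w (Ex 0 (nq (length L)))"
    using es wN unfolding elem_sub_def by blast
  then show ?thesis using key[of C] key[of "restr C N"] by (auto simp: restr_def)
qed

lemma compact:
  assumes satd: "saturated C (cardSuc |N| )" and es: "elem_sub C N"
    and P: "\<forall>(p,w)\<in>P. wf C p \<and> (\<forall>i. w i \<in> N)"
    and fs: "\<forall>G\<subseteq>P. finite G \<longrightarrow> fsat C n G"
  shows "fsat C n P"
proof (cases "finite N")
  case True
  then have "finite (dom C)" using finite_elem_sub[OF es] finite_subset by blast
  then show ?thesis using compact_fin fs by blast
next
  case False
  have "N \<subseteq> dom C" "N \<noteq> {}" using es unfolding elem_sub_def by auto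
  then show ?thesis using compact_inf[OF satd _ _ False, of "{}" P n] P fs by auto
qed

end


lemma tp_mem: "(p,u) \<in> snd (tp C A xs) \<longleftrightarrow> wf C p \<and> (\<forall>i. u i \<in> A) \<and> sat C (asg xs u) p"
  by (simp add: tp_def)

lemma wf_Neg: "wf C (Neg p) = wf C p" by (simp add: wf_def)
lemma wf_Conj: "wf C (Conj p p') = (wf C p \<and> wf C p')" by (simp add: wf_def)

lemma tp_complete:
  assumes "length ys = length xs" "\<forall>(p,u)\<in>snd (tp C A xs). sat C (asg ys u) p"
  shows "tp C A ys = tp C A xs"
proof -
  have "sat C (asg ys u) p \<longleftrightarrow> sat C (asg xs u) p" if "wf C p" "\<forall>i. u i \<in> A" for p u
  proof
    assume "sat C (asg xs u) p" then show "sat C (asg ys u) p" using assms(2) that by (auto simp: tp_mem)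
  next
    assume a: "sat C (asg ys u) p"
    show "sat C (asg xs u) p"
    proof (rule ccontr)
      assume "\<not> sat C (asg xs u) p"
      then have "(Neg p, u) \<in> snd (tp C A xs)" using that by (simp add: tp_mem wf_Neg)
      then show False using assms(2) a by auto
    qed
  qed
  then show ?thesis using assms(1) unfolding tp_def by auto
qed

lemma tp_conj:
  assumes "finite G" "G \<subseteq> snd (tp C A xs)" "A \<noteq> {}"
  shows "\<exists>p u. (p,u) \<in> snd (tp C A xs) \<and> (\<forall>a. length a = length xs \<longrightarrow> sat C (asg a u) p \<longrightarrow>
     (\<forall>(p',u')\<in>G. sat C (asg a u') p'))"
proof -
  have "\<forall>(p,w)\<in>G. wf C p \<and> (\<forall>i. w i \<in> A)" using assms(2) by (auto simp: tp_mem)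
  from conj_set[OF assms(1,3) this, of "length xs"] obtain p u where pu: "wf C p" "\<forall>i. u i \<in> A"
    "\<forall>ys. length ys = length xs \<longrightarrow> (sat C (asg ys u) p \<longleftrightarrow> (\<forall>(p',w')\<in>G. sat C (asg ys w') p'))"
    by blast
  have "sat C (asg xs u) p" using pu(3) assms(2) by (auto simp: tp_mem)
  then show ?thesis using pu by (intro exI[of _ p] exI[of _ u]) (auto simp: tp_mem)
qed

lemma nonsplit_lemma:
  assumes d: "length d = k"
    and star: "\<forall>\<chi> v. wf C \<chi> \<and> (\<forall>i. v i \<in> N) \<and> sat C (asg d v) \<chi> \<longrightarrow>
        (\<exists>e. length e = k \<and> set e \<subseteq> M \<and> sat C (asg e v) \<chi>)"
    and MN: "M \<subseteq> N" "M \<noteq> {}"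
  shows "nonsplit C N M (tp C N d)"
  unfolding nonsplit_def
proof (intro allI impI, elim conjE)
  fix p k' b c u
  assume wfp: "wf C p" and fvp: "fv p \<subseteq> {..<fst (tp C N d) + k'}"
    and lb: "length b = k'" and lc: "length c = k'" and bN: "set b \<subseteq> N" and cN: "set c \<subseteq> N"
    and uN: "\<forall>i. u i \<in> N"
    and inb: "(p, shift_asg (fst (tp C N d)) b u) \<in> snd (tp C N d)"
    and inc: "(Neg p, shift_asg (fst (tp C N d)) c u) \<in> snd (tp C N d)"
  have fvp': "fv p \<subseteq> {..<k + k'}" using fvp d by (simp add: tp_def)
  have sb: "sat C (asg d (shift_asg k b u)) p" using inb d by (simp add: tp_def)
  have sc: "\<not> sat C (asg d (shift_asg k c u)) p" using inc d by (simp add: tp_def)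
  define t where "t = (\<lambda>i::nat. if i < k then i else i + k')"
  have injt: "inj t" unfolding t_def by (rule injI) (auto split: if_splits)
  define v where "v = shift_asg k (b @ c) u"
  define chi where "chi = Conj p (Neg (ren t p))"
  have chi: "sat C (asg e v) chi \<longleftrightarrow> sat C (asg e (shift_asg k b u)) p \<and> \<not> sat C (asg e (shift_asg k c u)) p"
    if "length e = k" for e
  proof -
    have 1: "sat C (asg e v) p = sat C (asg e (shift_asg k b u)) p"
    proof (rule sat_cong)
      fix i assume "i \<in> fv p"
      then have "i < k + k'" using fvp' by auto
      then show "asg e v i = asg e (shift_asg k b u) i"
        using that lb lc by (auto simp: asg_def v_def shift_asg_def nth_append)
    qed
    have 2: "sat C (asg e v) (ren t p) = sat C (asg e (shift_asg k c u)) p"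
      unfolding sat_ren[OF injt]
    proof (rule sat_cong)
      fix i assume "i \<in> fv p"
      then have "i < k + k'" using fvp' by auto
      then show "(asg e v \<circ> t) i = asg e (shift_asg k c u) i"
      proof (cases "i < k")
        case True then show ?thesis using that by (simp add: asg_def t_def)
      next
        case False
        then have "t i = i + k'" "\<not> i + k' < length e" using that by (auto simp: t_def)
        moreover have "(b @ c) ! (i + k' - k) = c ! (i - k)"
        proof -
          have "\<not> i + k' - k < length b" "i + k' - k - length b = i - k" using False lb by auto
          then show ?thesis by (simp add: nth_append)
        qed
        moreover have "k \<le> i + k' \<and> i + k' < k + length (b @ c)" using False \<open>i < k + k'\<close> lb lc by simp
        ultimately show ?thesis using False that \<open>i < k + k'\<close> lc
          by (simp add: asg_def v_def shift_asg_def)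
      qed
    qed
    show ?thesis unfolding chi_def using 1 2 by simp
  qed
  have vN: "\<forall>i. v i \<in> N" using bN cN uN unfolding v_def shift_asg_def
    by (auto simp: nth_append)
  have wfchi: "wf C chi" using wfp by (simp add: chi_def wf_def wf_ren[unfolded wf_def])
  have "sat C (asg d v) chi" using chi[OF d] sb sc by simp
  then obtain e where e: "length e = k" "set e \<subseteq> M" "sat C (asg e v) chi"
    using star wfchi vN by blast
  have eb: "sat C (asg e (shift_asg k b u)) p" and ec: "\<not> sat C (asg e (shift_asg k c u)) p"
    using chi[OF e(1)] e(3) by auto
  obtain m0 where m0: "m0 \<in> M" using MN by blast
  define pi where "pi = (\<lambda>i::nat. if i < k then i + k' else if i < k + k' then i - k else i)"
  have injpi: "inj pi" unfolding pi_def by (rule injI) (auto split: if_splits)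
  define U where "U = (\<lambda>j. if k' \<le> j \<and> j < k' + k then e ! (j - k') else m0)"
  have UM: "\<forall>i. U i \<in> M"
  proof
    fix i show "U i \<in> M"
    proof (cases "k' \<le> i \<and> i < k' + k")
      case True
      then have "e ! (i - k') \<in> set e" using e(1) by (intro nth_mem) auto
      then show ?thesis using True e(2) unfolding U_def by auto
    next
      case False then show ?thesis using m0 unfolding U_def by (subst if_not_P[OF False]) simp
    qed
  qed
  have z: "sat C (asg z U) (ren pi p) = sat C (asg e (shift_asg k z u)) p" if "length z = k'" for z
    unfolding sat_ren[OF injpi]
  proof (rule sat_cong)
    fix i assume "i \<in> fv p"
    then have "i < k + k'" using fvp' by auto
    then show "(asg z U \<circ> pi) i = asg e (shift_asg k z u) i"
    proof (cases "i < k")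
      case True
      then have "pi i = i + k'" "\<not> i + k' < length z" "k' \<le> i + k' \<and> i + k' < k' + k" using that by (auto simp: pi_def)
      then show ?thesis using True e(1) by (simp add: asg_def U_def)
    next
      case False
      then have "pi i = i - k" "i - k < length z" "\<not> i < length e" "k \<le> i \<and> i < k + length z"
        using that e(1) \<open>i < k + k'\<close> by (auto simp: pi_def)
      then show ?thesis by (simp add: asg_def shift_asg_def)
    qed
  qed
  have wfr: "wf C (ren pi p)" using wfp by (simp add: wf_ren)
  have "(ren pi p, U) \<in> snd (tp C M b)" using z[OF lb] eb wfr UM by (simp add: tp_mem)
  moreover have "(ren pi p, U) \<notin> snd (tp C M c)" using z[OF lc] ec by (simp add: tp_mem)
  ultimately show "tp C M b \<noteq> tp C M c" by auto
qed

theorem claim1p11: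
  fixes C :: "('f,'r,'a) struc" and N :: "'a set" and \<kappa> :: "'k rel"
    and q :: "nat \<times> (('f,'r) fm \<times> (nat \<Rightarrow> 'a)) set" and m :: nat
  assumes "struct C"
    and "NIP C"
    and "Card_order \<kappa>" and "regularCard \<kappa>"
    and "card_lt {\<phi>. wf C \<phi>} \<kappa>"
    and "elem_sub C N"
    and "saturated C (cardSuc (card_of N))"
    and "ksaturated C N \<kappa>"
    and "q \<in> Snsp_ge C N \<kappa> m"
  shows "\<forall>M \<phi> k w. elem_sub (restr C N) M \<and> card_lt M \<kappa> \<and>
            wf C \<phi> \<and> (\<forall>i. w i \<in> N) \<longrightarrow>
          (\<exists>\<psi> w' . (\<psi>, w') \<in> snd q \<and>
            (\<exists>\<eta> :: 'a list \<Rightarrow> bool.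
               \<forall>a. length a = m \<and> set a \<subseteq> dom C \<and> sat C (asg a w') \<psi> \<longrightarrow>
                 (\<forall>b. length b = k \<and> set b \<subseteq> M \<longrightarrow>
                    (sat C (asg a (shift_asg m b w)) \<phi> \<longleftrightarrow> \<eta> b))))"
proof (intro allI impI, elim conjE)
  fix M :: "'a set" and \<phi> :: "('f,'r) fm" and k :: nat and w :: "nat \<Rightarrow> 'a"
  assume Mes: "elem_sub (restr C N) M" and Mk: "card_lt M \<kappa>" and wfphi: "wf C \<phi>"
    and wN: "\<forall>i. w i \<in> N"
  have es: "elem_sub C N" and satd: "saturated C (cardSuc (card_of N))" using assms by auto
  have NC: "N \<subseteq> dom C" "N \<noteq> {}" using es unfolding elem_sub_def by auto
  have MN: "M \<subseteq> N" "M \<noteq> {}" using Mes unfolding elem_sub_def by (auto simp: restr_def)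
  obtain a0 where a0: "q = tp C N a0" "length a0 = m" "set a0 \<subseteq> dom C"
    using assms(9) unfolding Snsp_ge_def Stypes_def by auto
  have qmem: "(p,u) \<in> snd q \<longleftrightarrow> wf C p \<and> (\<forall>i. u i \<in> N) \<and> sat C (asg a0 u) p" for p u
    using a0 by (simp add: tp_mem)
  define \<eta> where "\<eta> = (\<lambda>b. sat C (asg a0 (shift_asg m b w)) \<phi>)"
  show "\<exists>\<psi> w' . (\<psi>, w') \<in> snd q \<and>
            (\<exists>\<eta> :: 'a list \<Rightarrow> bool.
               \<forall>a. length a = m \<and> set a \<subseteq> dom C \<and> sat C (asg a w') \<psi> \<longrightarrow>
                 (\<forall>b. length b = k \<and> set b \<subseteq> M \<longrightarrow>
                    (sat C (asg a (shift_asg m b w)) \<phi> \<longleftrightarrow> \<eta> b)))"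
  proof (rule ccontr)
    assume nG: "\<not> ?thesis"
    define Bad where "Bad = (\<lambda>p u. {b. length b = k \<and> set b \<subseteq> M \<and> (\<exists>a. length a = m \<and> set a \<subseteq> dom C \<and>
        sat C (asg a u) p \<and> (sat C (asg a (shift_asg m b w)) \<phi> \<noteq> \<eta> b))})"
    have Badne: "Bad p u \<noteq> {}" if "(p,u) \<in> snd q" for p u
    proof -
      let ?R = "\<lambda>\<eta>'::'a list \<Rightarrow> bool. \<forall>a. length a = m \<and> set a \<subseteq> dom C \<and> sat C (asg a u) p \<longrightarrow>
                 (\<forall>b. length b = k \<and> set b \<subseteq> M \<longrightarrow>
                    (sat C (asg a (shift_asg m b w)) \<phi> \<longleftrightarrow> \<eta>' b))"
      have "\<not> (\<exists>\<eta>'. ?R \<eta>')"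
      proof
        assume h: "\<exists>\<eta>'. ?R \<eta>'"
        show False by (rule notE[OF nG], intro exI[of _ p] exI[of _ u] conjI, rule that, rule h)
      qed
      then have "\<not> ?R \<eta>" by (rule contrapos_nn) (rule exI)
      then obtain a b where "length a = m" "set a \<subseteq> dom C" "sat C (asg a u) p" "length b = k" "set b \<subseteq> M"
        "sat C (asg a (shift_asg m b w)) \<phi> \<noteq> \<eta> b" by blast
      then have "b \<in> Bad p u" unfolding Bad_def by blast
      then show ?thesis by blast
    qed
    have Badmono: "Bad p u \<subseteq> Bad p' u'"
      if "\<forall>a. length a = m \<longrightarrow> sat C (asg a u) p \<longrightarrow> sat C (asg a u') p'" for p u p' u'
      using that unfolding Bad_def by blast
    define Sig where "Sig = {(Neg chi, v) | chi v. wf C chi \<and> (\<forall>i. v i \<in> N) \<and>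
        (\<exists>p u. (p,u) \<in> snd q \<and> (\<forall>e\<in>Bad p u. \<not> sat C (asg e v) chi))}"
    have Sigwf: "\<forall>(p,w)\<in>Sig. wf C p \<and> (\<forall>i. w i \<in> N)" unfolding Sig_def by (auto simp: wf_Neg)
    have Sigfs: "\<forall>G\<subseteq>Sig. finite G \<longrightarrow> fsat C k G"
    proof (intro allI impI)
      fix G assume G: "G \<subseteq> Sig" "finite G"
      have "\<forall>g\<in>G. \<exists>h. h \<in> snd q \<and> (\<exists>chi. fst g = Neg chi \<and> (\<forall>e\<in>Bad (fst h) (snd h). \<not> sat C (asg e (snd g)) chi))"
        using G(1) unfolding Sig_def by fastforce
      then obtain h where h: "\<forall>g\<in>G. h g \<in> snd q \<and> (\<exists>chi. fst g = Neg chi \<and> (\<forall>e\<in>Bad (fst (h g)) (snd (h g)). \<not> sat C (asg e (snd g)) chi))"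
        by metis
      have "h ` G \<subseteq> snd q" using h by auto
      from tp_conj[OF finite_imageI[OF G(2)] this[unfolded a0(1)] NC(2)] obtain p u where pu:
        "(p,u) \<in> snd q" "\<forall>a. length a = m \<longrightarrow> sat C (asg a u) p \<longrightarrow> (\<forall>(p',u')\<in>h ` G. sat C (asg a u') p')"
        using a0 by auto
      obtain e where e: "e \<in> Bad p u" using Badne[OF pu(1)] by blast
      have "sat C (asg e v) x" if xv: "(x,v) \<in> G" for x v
      proof -
        have sub: "Bad p u \<subseteq> Bad (fst (h (x,v))) (snd (h (x,v)))"
          by (rule Badmono) (use pu(2) xv in fastforce)
        obtain chi where "x = Neg chi" "\<forall>e\<in>Bad (fst (h (x,v))) (snd (h (x,v))). \<not> sat C (asg e v) chi"
          using h xv by fastforce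
        then show ?thesis using sub e by auto
      qed
      moreover have "length e = k" "set e \<subseteq> dom C" using e MN NC unfolding Bad_def by auto
      ultimately show "fsat C k G" unfolding fsat_def by auto
    qed
    obtain d where d: "length d = k" "set d \<subseteq> dom C" "\<forall>(p,v)\<in>Sig. sat C (asg d v) p"
      using compact[OF satd es Sigwf Sigfs] unfolding fsat_def by blast
    have star: "\<exists>e\<in>Bad p u. sat C (asg e v) chi"
      if "wf C chi" "\<forall>i. v i \<in> N" "sat C (asg d v) chi" "(p,u) \<in> snd q" for chi v p u
    proof (rule ccontr)
      assume "\<not> ?thesis"
      then have "(Neg chi, v) \<in> Sig" using that unfolding Sig_def by blast
      then show False using d(3) that(3) by auto
    qed
    have rSnsp: "tp C N d \<in> Snsp_lt C N \<kappa>"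
    proof -
      obtain p0 u0 where p0: "(p0,u0) \<in> snd q"
        using tp_conj[of "{}" C N a0] NC(2) a0(1) by auto
      have st: "\<forall>chi v. wf C chi \<and> (\<forall>i. v i \<in> N) \<and> sat C (asg d v) chi \<longrightarrow>
        (\<exists>e. length e = k \<and> set e \<subseteq> M \<and> sat C (asg e v) chi)"
      proof (intro allI impI, elim conjE)
        fix chi v assume "wf C chi" "\<forall>i. v i \<in> N" "sat C (asg d v) chi"
        from star[OF this p0] obtain e where "e \<in> Bad p0 u0" "sat C (asg e v) chi" by blast
        then show "\<exists>e. length e = k \<and> set e \<subseteq> M \<and> sat C (asg e v) chi" unfolding Bad_def by blast
      qed
      have "nonsplit C N M (tp C N d)" by (rule nonsplit_lemma[OF d(1) st MN])
      moreover have "tp C N d \<in> Stypes C N k" using d unfolding Stypes_def by blast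
      ultimately show ?thesis unfolding Snsp_lt_def using MN(1) Mk by blast
    qed
    have wo: "weakly_orth C N q (tp C N d)" using assms(9) rSnsp unfolding Snsp_ge_def by blast
    define t where "t = sat C (asg (a0 @ d) w) \<phi>"
    have rmem: "(p,u) \<in> snd (tp C N d) \<longleftrightarrow> wf C p \<and> (\<forall>i. u i \<in> N) \<and> sat C (asg d u) p" for p u
      by (simp add: tp_mem)
    have claim: "\<exists>p u chi v. (p,u) \<in> snd q \<and> (chi,v) \<in> snd (tp C N d) \<and>
       (\<forall>a e. length a = m \<and> set a \<subseteq> dom C \<and> length e = k \<and> set e \<subseteq> dom C \<and>
          sat C (asg a u) p \<and> sat C (asg e v) chi \<longrightarrow> sat C (asg (a @ e) w) \<phi> = t)"
    proof (rule ccontr)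
      assume nC: "\<not> ?thesis"
      define s1 where "s1 = (\<lambda>i::nat. if i < m then i else i + k)"
      have inj1: "inj s1" unfolding s1_def by (rule injI) (auto split: if_splits)
      define l1 where "l1 = (\<lambda>(u::nat \<Rightarrow> 'a) j. if m + k \<le> j then u (j - k) else u j)"
      define s2 where "s2 = (\<lambda>i::nat. i + m)"
      have inj2: "inj s2" unfolding s2_def by (rule injI) auto
      define l2 where "l2 = (\<lambda>(v::nat \<Rightarrow> 'a) j. if m \<le> j then v (j - m) else v j)"
      have L1: "asg (a @ e) (l1 u) \<circ> s1 = asg a u" if "length a = m" "length e = k" for a e u
        using that by (auto simp: fun_eq_iff asg_def l1_def s1_def nth_append)
      have L2: "asg (a @ e) (l2 v) \<circ> s2 = asg e v" if "length a = m" "length e = k" for a e v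
        using that by (auto simp: fun_eq_iff asg_def l2_def s2_def nth_append)
      have R1: "sat C (asg (a @ e) (l1 u)) (ren s1 p) = sat C (asg a u) p" if "length a = m" "length e = k" for a e u p
        by (simp only: sat_ren[OF inj1] L1[OF that])
      have R2: "sat C (asg (a @ e) (l2 u)) (ren s2 p) = sat C (asg e u) p" if "length a = m" "length e = k" for a e u p
        by (simp only: sat_ren[OF inj2] L2[OF that])
      define pt where "pt = (if t then Neg \<phi> else \<phi>)"
      have pt: "sat C x pt \<longleftrightarrow> sat C x \<phi> \<noteq> t" for x unfolding pt_def by auto
      define Q1 where "Q1 = (\<lambda>(p,u). (ren s1 p, l1 u)) ` snd q"
      define Q2 where "Q2 = (\<lambda>(p,v). (ren s2 p, l2 v)) ` snd (tp C N d)"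
      define Pi where "Pi = Q1 \<union> Q2 \<union> {(pt, w)}"
      have Piwf: "\<forall>(p,u)\<in>Pi. wf C p \<and> (\<forall>i. u i \<in> N)"
        unfolding Pi_def Q1_def Q2_def using wfphi wN
        by (auto simp: qmem rmem wf_ren l1_def l2_def pt_def wf_Neg)
      have Pifs: "\<forall>G\<subseteq>Pi. finite G \<longrightarrow> fsat C (m + k) G"
      proof (intro allI impI)
        fix G assume G: "G \<subseteq> Pi" "finite G"
        have "\<forall>g\<in>G \<inter> Q1. \<exists>h. h \<in> snd q \<and> g = (ren s1 (fst h), l1 (snd h))"
          unfolding Q1_def by auto
        then obtain f1 where f1: "\<forall>g\<in>G \<inter> Q1. f1 g \<in> snd q \<and> g = (ren s1 (fst (f1 g)), l1 (snd (f1 g)))"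
          by metis
        have "\<forall>g\<in>G \<inter> Q2. \<exists>h. h \<in> snd (tp C N d) \<and> g = (ren s2 (fst h), l2 (snd h))"
          unfolding Q2_def by auto
        then obtain f2 where f2: "\<forall>g\<in>G \<inter> Q2. f2 g \<in> snd (tp C N d) \<and> g = (ren s2 (fst (f2 g)), l2 (snd (f2 g)))"
          by metis
        have "f1 ` (G \<inter> Q1) \<subseteq> snd (tp C N a0)" using f1 a0(1) by auto
        from tp_conj[OF _ this NC(2)] G(2) obtain p u where pu: "(p,u) \<in> snd q"
          "\<forall>a. length a = m \<longrightarrow> sat C (asg a u) p \<longrightarrow> (\<forall>(p',u')\<in>f1 ` (G \<inter> Q1). sat C (asg a u') p')"
          using a0 by auto
        have "f2 ` (G \<inter> Q2) \<subseteq> snd (tp C N d)" using f2 by auto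
        from tp_conj[OF _ this NC(2)] G(2) obtain chi v where cv: "(chi,v) \<in> snd (tp C N d)"
          "\<forall>e. length e = k \<longrightarrow> sat C (asg e v) chi \<longrightarrow> (\<forall>(p',u')\<in>f2 ` (G \<inter> Q2). sat C (asg e u') p')"
          using d by auto
        obtain a e where ae: "length a = m" "set a \<subseteq> dom C" "length e = k" "set e \<subseteq> dom C"
          "sat C (asg a u) p" "sat C (asg e v) chi" "sat C (asg (a @ e) w) \<phi> \<noteq> t"
          using nC pu(1) cv(1) by blast
        have "sat C (asg (a @ e) u') p'" if "(p',u') \<in> G" for p' u'
        proof -
          have "(p',u') \<in> Q1 \<or> (p',u') \<in> Q2 \<or> (p',u') = (pt, w)" using that G(1) unfolding Pi_def by auto
          then show ?thesis
          proof (elim disjE)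
            assume "(p',u') \<in> Q1"
            then have g: "f1 (p',u') \<in> f1 ` (G \<inter> Q1)" "(p',u') = (ren s1 (fst (f1 (p',u'))), l1 (snd (f1 (p',u'))))"
              using f1 that by auto
            have "sat C (asg a (snd (f1 (p',u')))) (fst (f1 (p',u')))"
              using pu(2) ae(1,5) g(1) by fastforce
            moreover obtain p0 u0 where "f1 (p',u') = (p0,u0)" by (cases "f1 (p',u')")
            ultimately show ?thesis using g(2) R1[OF ae(1,3), of u0 p0] by simp
          next
            assume "(p',u') \<in> Q2"
            then have g: "f2 (p',u') \<in> f2 ` (G \<inter> Q2)" "(p',u') = (ren s2 (fst (f2 (p',u'))), l2 (snd (f2 (p',u'))))"
              using f2 that by auto
            have "sat C (asg e (snd (f2 (p',u')))) (fst (f2 (p',u')))"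
              using cv(2) ae(3,6) g(1) by fastforce
            moreover obtain p0 u0 where "f2 (p',u') = (p0,u0)" by (cases "f2 (p',u')")
            ultimately show ?thesis using g(2) R2[OF ae(1,3), of u0 p0] by simp
          next
            assume "(p',u') = (pt, w)"
            then show ?thesis using ae(7) pt by simp
          qed
        qed
        then show "fsat C (m + k) G" unfolding fsat_def using ae
          by (intro exI[of _ "a @ e"]) auto
      qed
      obtain z where z: "length z = m + k" "set z \<subseteq> dom C" "\<forall>(p,u)\<in>Pi. sat C (asg z u) p"
        using compact[OF satd es Piwf Pifs] unfolding fsat_def by blast
      define a' where "a' = take m z"
      define e' where "e' = drop m z"
      have ze: "z = a' @ e'" "length a' = m" "length e' = k" "set a' \<subseteq> dom C" "set e' \<subseteq> dom C"
        using z unfolding a'_def e'_def by (auto dest: in_set_takeD in_set_dropD)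
      have "\<forall>(p,u)\<in>snd (tp C N a0). sat C (asg a' u) p"
      proof (clarify)
        fix p u assume "(p,u) \<in> snd (tp C N a0)"
        then have "(ren s1 p, l1 u) \<in> Pi" unfolding Pi_def Q1_def using a0(1) by force
        then have "sat C (asg z (l1 u)) (ren s1 p)" using z(3) by auto
        then show "sat C (asg a' u) p" using R1[OF ze(2,3), of u p] ze(1) by simp
      qed
      then have ta: "tp C N a' = q" using tp_complete[of a' a0] ze(2) a0 by simp
      have "\<forall>(p,u)\<in>snd (tp C N d). sat C (asg e' u) p"
      proof (clarify)
        fix p u assume "(p,u) \<in> snd (tp C N d)"
        then have "(ren s2 p, l2 u) \<in> Pi" unfolding Pi_def Q2_def by force
        then have "sat C (asg z (l2 u)) (ren s2 p)" using z(3) by auto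
        then show "sat C (asg e' u) p" using R2[OF ze(2,3), of u p] ze(1) by simp
      qed
      then have te: "tp C N e' = tp C N d" using tp_complete[of e' d] ze(3) d(1) by simp
      have "tp C N (a' @ e') = tp C N (a0 @ d)"
      proof -
        have r: "realizes C N a' q" "realizes C N a0 q" "realizes C N e' (tp C N d)" "realizes C N d (tp C N d)"
          using ta te ze a0 d unfolding realizes_def by auto
        show ?thesis using wo[unfolded weakly_orth_def, rule_format, of a' a0 e' d] r by blast
      qed
      moreover have "(pt, w) \<in> Pi" unfolding Pi_def by simp
      then have "sat C (asg z w) \<phi> \<noteq> t" using z(3) pt by auto
      ultimately show False using wfphi wN unfolding t_def tp_def ze(1)[symmetric] by auto
    qed
    then obtain p u chi v where pu: "(p,u) \<in> snd q" and cv: "(chi,v) \<in> snd (tp C N d)"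
      and cl: "\<forall>a e. length a = m \<and> set a \<subseteq> dom C \<and> length e = k \<and> set e \<subseteq> dom C \<and>
          sat C (asg a u) p \<and> sat C (asg e v) chi \<longrightarrow> sat C (asg (a @ e) w) \<phi> = t"
      by blast
    have "wf C chi" "\<forall>i. v i \<in> N" "sat C (asg d v) chi" using cv by (auto simp: rmem)
    from star[OF this pu] obtain e where e: "e \<in> Bad p u" "sat C (asg e v) chi" by blast
    from e(1) obtain a where a: "length e = k" "set e \<subseteq> M" "length a = m" "set a \<subseteq> dom C"
      "sat C (asg a u) p" "sat C (asg a (shift_asg m e w)) \<phi> \<noteq> \<eta> e"
      unfolding Bad_def by blast
    have eC: "set e \<subseteq> dom C" using a(2) MN NC by blast
    have 1: "sat C (asg (a @ e) w) \<phi> = t" using cl a eC e(2) by blast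
    have "sat C (asg a0 u) p" using pu qmem by blast
    then have 2: "sat C (asg (a0 @ e) w) \<phi> = t" using cl a0 a eC e(2) by blast
    show False using 1 2 a(6) asg_shift[OF a(3)] asg_shift[OF a0(2)] unfolding \<eta>_def by simp
  qed
qed

end
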